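(* For $n\ge1$ and every $\pi\in\mathfrak{S}_n$, $$\mathsf{des}\,\pi+(31\text{-}2)\pi+1=\pi(1)+(13\text{-}2)\pi.$$
   Context: $\mathsf{des}\,\pi=\#\{i\in[n-1]:\pi(i)>\pi(i+1)\}$; $(31\text{-}2)\pi=\#\{(i,j):i+1<j\le n,\ \pi(i+1)<\pi(j)<\pi(i)\}$; $(13\text{-}2)\pi=\#\{(i,j):i+1<j\le n,\ \pi(i)<\pi(j)<\pi(i+1)\}$. *)

theory Defs
  imports "HOL-Combinatorics.Permutations"
begin

definition des :: "nat \<Rightarrow> (nat \<Rightarrow> nat) \<Rightarrow> nat" where
  "des n \<pi> = card {i \<in> {1..n-1}. \<pi> i > \<pi> (i+1)}"

definition pat31_2 :: "nat \<Rightarrow> (nat \<Rightarrow> nat) \<Rightarrow> nat" where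
  "pat31_2 n \<pi> = card {(i,j). 1 \<le> i \<and> i + 1 < j \<and> j \<le> n \<and> \<pi> (i+1) < \<pi> j \<and> \<pi> j < \<pi> i}"

definition pat13_2 :: "nat \<Rightarrow> (nat \<Rightarrow> nat) \<Rightarrow> nat" where
  "pat13_2 n \<pi> = card {(i,j). 1 \<le> i \<and> i + 1 < j \<and> j \<le> n \<and> \<pi> i < \<pi> j \<and> \<pi> j < \<pi> (i+1)}"

end

theory Submission
  imports Defs
begin

lemma key:
  fixes n :: nat and \<pi> :: "nat \<Rightarrow> nat"
  assumes inj: "inj \<pi>" and i: "1 \<le> i" "i \<le> n - 1" "n \<ge> 1"
  defines "L \<equiv> \<lambda>k. card {j. k < j \<and> j \<le> n \<and> \<pi> j < \<pi> k}"
  shows "int (if \<pi> i > \<pi> (i+1) then 1 else 0)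
     + int (card {j. i + 1 < j \<and> j \<le> n \<and> \<pi> (i+1) < \<pi> j \<and> \<pi> j < \<pi> i})
     - int (card {j. i + 1 < j \<and> j \<le> n \<and> \<pi> i < \<pi> j \<and> \<pi> j < \<pi> (i+1)})
     = int (L i) - int (L (i+1))"
proof -
  define A where "A = {j. i+1<j \<and> j\<le>n \<and> \<pi> j < \<pi> i}"
  define B where "B = {j. i+1<j \<and> j\<le>n \<and> \<pi> j < \<pi> (i+1)}"
  define C where "C = {j. i + 1 < j \<and> j \<le> n \<and> \<pi> (i+1) < \<pi> j \<and> \<pi> j < \<pi> i}"
  define D where "D = {j. i + 1 < j \<and> j \<le> n \<and> \<pi> i < \<pi> j \<and> \<pi> j < \<pi> (i+1)}"
  have goal_eq: "?thesis \<longleftrightarrow> int (if \<pi> i > \<pi> (i+1) then 1 else 0) + int (card C) - int (card D) = int (L i) - int (L (i+1))"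
    unfolding C_def D_def by (rule refl)
  have fin: "finite A" "finite B" "finite C" "finite D" unfolding A_def B_def C_def D_def by auto
  have ne: "\<pi> i \<noteq> \<pi> (i+1)" using inj by (metis inj_eq n_not_Suc_n add.commute plus_1_eq_Suc)
  have Li: "L i = card A + (if \<pi> (i+1) < \<pi> i then 1 else 0)"
  proof (cases "\<pi> (i+1) < \<pi> i")
    case True
    have "{j. i < j \<and> j \<le> n \<and> \<pi> j < \<pi> i} = insert (i+1) A"
      using True i unfolding A_def by auto
    moreover have "i+1 \<notin> A" unfolding A_def by auto
    ultimately show ?thesis using True fin by (simp add: L_def)
  next
    case False
    have "{j. i < j \<and> j \<le> n \<and> \<pi> j < \<pi> i} = A"
    proof -
      have "\<And>j. i < j \<Longrightarrow> j = i+1 \<or> i+1 < j" by arith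
      then show ?thesis using False ne unfolding A_def by (auto simp del: One_nat_def)
    qed
    then show ?thesis using False by (simp add: L_def)
  qed
  have Li1: "L (i+1) = card B" unfolding L_def B_def by simp
  have inj2: "\<And>j. i+1 < j \<Longrightarrow> \<pi> j \<noteq> \<pi> (i+1)" "\<And>j. i+1 < j \<Longrightarrow> \<pi> j \<noteq> \<pi> i"
    using inj by (metis injD less_irrefl, metis injD less_irrefl add_lessD1)
  have tri: "\<And>j. i+1 < j \<Longrightarrow> \<pi> j < \<pi> (i+1) \<or> \<pi> (i+1) < \<pi> j"
            "\<And>j. i+1 < j \<Longrightarrow> \<pi> j < \<pi> i \<or> \<pi> i < \<pi> j"
    using inj2 by (meson linorder_neqE_nat)+
  show ?thesis
  proof (cases "\<pi> (i+1) < \<pi> i")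
    case True
    have "D = {}" using True unfolding D_def by auto
    moreover have "A = B \<union> C" using True tri unfolding A_def B_def C_def
      by auto
    moreover have "B \<inter> C = {}" unfolding B_def C_def by auto
    ultimately show ?thesis using True fin Li Li1 goal_eq
      by (simp add: card_Un_disjoint)
  next
    case False
    then have lt: "\<pi> i < \<pi> (i+1)" using ne by auto
    have "C = {}" using lt unfolding C_def by auto
    moreover have "B = A \<union> D" using lt tri unfolding A_def B_def D_def
      by auto
    moreover have "A \<inter> D = {}" unfolding A_def D_def by auto
    ultimately show ?thesis using False fin Li Li1 goal_eq
      by (simp add: card_Un_disjoint)
  qed
qed

theorem lemma5p4:
  fixes n :: nat and \<pi> :: "nat \<Rightarrow> nat"
  assumes "n \<ge> 1" and "\<pi> permutes {1..n}"
  shows "des n \<pi> + pat31_2 n \<pi> + 1 = \<pi> 1 + pat13_2 n \<pi>"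
proof -
  define L where "L \<equiv> \<lambda>k. card {j. k < j \<and> j \<le> n \<and> \<pi> j < \<pi> k}"
  have inj: "inj \<pi>" using assms(2) permutes_inj by blast
  define C where "C = (\<lambda>i. {j. i + 1 < j \<and> j \<le> n \<and> \<pi> (i+1) < \<pi> j \<and> \<pi> j < \<pi> i})"
  define D where "D = (\<lambda>i. {j. i + 1 < j \<and> j \<le> n \<and> \<pi> i < \<pi> j \<and> \<pi> j < \<pi> (i+1)})"
  have s31: "pat31_2 n \<pi> = (\<Sum>i\<in>{1..n-1}. card (C i))"
  proof -
    have "{(i,j). 1 \<le> i \<and> i + 1 < j \<and> j \<le> n \<and> \<pi> (i+1) < \<pi> j \<and> \<pi> j < \<pi> i} = Sigma {1..n-1} C"
      unfolding C_def by auto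
    then show ?thesis unfolding pat31_2_def by (simp add: card_SigmaI C_def)
  qed
  have s13: "pat13_2 n \<pi> = (\<Sum>i\<in>{1..n-1}. card (D i))"
  proof -
    have "{(i,j). 1 \<le> i \<and> i + 1 < j \<and> j \<le> n \<and> \<pi> i < \<pi> j \<and> \<pi> j < \<pi> (i+1)} = Sigma {1..n-1} D"
      unfolding D_def by auto
    then show ?thesis unfolding pat13_2_def by (simp add: card_SigmaI D_def)
  qed
  have sdes: "des n \<pi> = (\<Sum>i\<in>{1..n-1}. (if \<pi> i > \<pi> (i+1) then 1 else 0))"
    unfolding des_def by (simp add: sum.If_cases Int_def conj_commute)
  have "int (des n \<pi>) + int (pat31_2 n \<pi>) - int (pat13_2 n \<pi>)
     = (\<Sum>i\<in>{1..n-1}. int (if \<pi> i > \<pi> (i+1) then 1 else 0) + int (card (C i)) - int (card (D i)))"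
    unfolding sdes s31 s13 by (simp add: sum.distrib sum_subtractf)
  also have "\<dots> = (\<Sum>i\<in>{1..n-1}. int (L i) - int (L (i+1)))"
    apply (rule sum.cong[OF refl])
    unfolding C_def D_def L_def using key[OF inj _ _ assms(1)] by auto
  also have "\<dots> = int (L 1) - int (L n)"
  proof -
    have "\<And>m. (\<Sum>i\<in>{1..m}. int (L i) - int (L (i+1))) = int (L 1) - int (L (m+1))"
    proof -
      fix m show "(\<Sum>i\<in>{1..m}. int (L i) - int (L (i+1))) = int (L 1) - int (L (m+1))"
        by (induction m) auto
    qed
    from this[of "n-1"] show ?thesis using assms(1) by simp
  qed
  also have "L n = 0" unfolding L_def by simp
  also have "L 1 = \<pi> 1 - 1"
  proof -
    have "{j. 1 < j \<and> j \<le> n \<and> \<pi> j < \<pi> 1} = {j\<in>{1..n}. \<pi> j < \<pi> 1}" by (auto simp: le_eq_less_or_eq)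
    moreover have "\<pi> ` {j\<in>{1..n}. \<pi> j < \<pi> 1} = {v\<in>{1..n}. v < \<pi> 1}"
    proof -
      have "\<pi> ` {1..n} = {1..n}" using assms(2) permutes_image by blast
      moreover have "\<pi> ` {j\<in>{1..n}. \<pi> j < \<pi> 1} = {v\<in>\<pi> ` {1..n}. v < \<pi> 1}" by auto
      ultimately show ?thesis by simp
    qed
    moreover have "\<pi> 1 \<in> {1..n}" using assms permutes_in_image by fastforce
    moreover have "{v\<in>{1..n}. v < \<pi> 1} = {1..<\<pi> 1}" using calculation(3) by auto
    ultimately have "L 1 = card {j\<in>{1..n}. \<pi> j < \<pi> 1}" unfolding L_def by simp
    also have "\<dots> = card (\<pi> ` {j\<in>{1..n}. \<pi> j < \<pi> 1})"
      by (rule card_image[symmetric], rule inj_on_subset[OF inj], simp)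
    also have "\<dots> = \<pi> 1 - 1" using \<open>\<pi> ` _ = _\<close> \<open>{v\<in>{1..n}. v < \<pi> 1} = _\<close> by simp
    finally show ?thesis .
  qed
  finally have "int (des n \<pi>) + int (pat31_2 n \<pi>) - int (pat13_2 n \<pi>) = int (\<pi> 1 - 1)" by simp
  moreover have "\<pi> 1 \<ge> 1" using assms permutes_in_image by fastforce
  ultimately show ?thesis by linarith
qed

end
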